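(* Let $n\geqslant 3$, let $S$ be a caterpillar species tree with canonical label vector $(s_1,\dots,s_n)$, and let $k_s,k_\ell\in\{1,\dots,n\}$ with $k_s<k_\ell$ and $k_\ell\neq 2$. Let $G$ be the caterpillar gene tree with canonical label vector $(g_1,\dots,g_n)$ given by $g_{k_s}=s_{k_\ell}$, $g_k=s_{k-1}$ for $k_s<k\leqslant k_\ell$, and $g_k=s_k$ for $k\notin\{k_s,\dots,k_\ell\}$ (a forward incrementation of $S$ on the component $k_s,\dots,k_\ell$). Writing $\delta=\delta_{k_s,1}$ (equal to $1$ if $k_s=1$ and $0$ otherwise), the number of coalescent histories for $(G,S)$ equals $$\sum_{c=0}^{\min(k_s-2+\delta,\ n-k_\ell)} D(k_\ell-1+c,\ k_s-2+\delta-c)\; D_{k_\ell-k_s-\delta+2+2c}\big(n-k_\ell-c,\ n-k_s+1-\delta+c\big).$$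
   Context: All trees are binary, rooted, leaf-labeled. A caterpillar tree with $n$ leaves is one in which some internal node is descended from all other internal nodes. Its canonical label vector $(x_1,\dots,x_n)$ has $x_1,x_2$ the labels of the two cherry leaves and, for $3\leqslant i\leqslant n$, $x_i$ the label of the leaf separated from the root by $n-i+1$ edges. Internal nodes are numbered $1,\dots,n-1$ from cherry to root; internal edge $i$ is the edge above node $i$, with an extra edge $n-1$ above the root. A coalescent history for $(G,S)$ is a map $h$ from internal nodes of $G$ to internal edges of $S$ such that (1) every label of a leaf below node $v$ of $G$ labels a leaf of $S$ below edge $h(v)$, and (2) if $v_2$ is descended from $v_1$ in $G$ then $h(v_2)$ is descended from $h(v_1)$ (objects are descended from themselves). Catalan's triangle: $D(a,b)=1$ if $b=0$, $D(a,b)=\binom{a+b}{b}-\binom{a+b}{b-1}$ if $1\leqslant b\leqslant a$, and $D(a,b)=0$ if $b>a$ (the number of monotonic lattice paths from $(0,0)$ to $(a,b)$ with steps $(1,0),(0,1)$ never going above $y=x$). Catalan's trapezoid of order $m\geqslant1$: $D_m(a,b)=\binom{a+b}{b}$ if $0\leqslant b<m$, $D_m(a,b)=\binom{a+b}{b}-\binom{a+b}{b-m}$ if $m\leqslant b\leqslant a+m-1$, and $D_m(a,b)=0$ if $b>a+m-1$ (the number of such paths from $(0,0)$ to $(a,b)$ never going above $y=x+m-1$). *)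

theory Defs
  imports Main "HOL-Library.Sublist" "HOL-Library.FuncSet"
begin

datatype 'a tree = Leaf 'a | Node "'a tree" "'a tree"

fun leaves :: "'a tree \<Rightarrow> 'a set" where
  "leaves (Leaf a) = {a}"
| "leaves (Node l r) = leaves l \<union> leaves r"

fun subt :: "'a tree \<Rightarrow> bool list \<Rightarrow> 'a tree option" where
  "subt t [] = Some t"
| "subt (Node l r) (False # p) = subt l p"
| "subt (Node l r) (True # p) = subt r p"
| "subt (Leaf a) (b # p) = None"

definition internal :: "'a tree \<Rightarrow> bool list set" where
  "internal t = {p. \<exists>l r. subt t p = Some (Node l r)}"

text \<open>Labels of the leaves below a node (equivalently: below the edge above that node).\<close>
definition leaves_at :: "'a tree \<Rightarrow> bool list \<Rightarrow> 'a set" where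
  "leaves_at t p = (case subt t p of Some u \<Rightarrow> leaves u | None \<Rightarrow> {})"

text \<open>Internal edges of S are identified with the internal node directly below them
  (the root edge with the root). Node/edge q is descended from p iff p is a prefix of q.\<close>
definition coal_hist :: "'a tree \<Rightarrow> 'a tree \<Rightarrow> (bool list \<Rightarrow> bool list) \<Rightarrow> bool" where
  "coal_hist G S h \<longleftrightarrow>
     (\<forall>v\<in>internal G. h v \<in> internal S \<and> leaves_at G v \<subseteq> leaves_at S (h v)) \<and>
     (\<forall>v1\<in>internal G. \<forall>v2\<in>internal G. prefix v1 v2 \<longrightarrow> prefix (h v1) (h v2))"

definition num_coal_hist :: "'a tree \<Rightarrow> 'a tree \<Rightarrow> nat" where
  "num_coal_hist G S = card {h. h \<in> internal G \<rightarrow>\<^sub>E internal S \<and> coal_hist G S h}"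

text \<open>Caterpillar with canonical label vector [x1, x2, ..., xn]:
  cherry (x1,x2), then x3, ..., xn attached successively towards the root.\<close>
fun caterpillar :: "'a list \<Rightarrow> 'a tree" where
  "caterpillar (x1 # x2 # rest) = foldl (\<lambda>t y. Node t (Leaf y)) (Node (Leaf x1) (Leaf x2)) rest"
| "caterpillar [x] = Leaf x"
| "caterpillar [] = undefined"

section \<open>Catalan triangle and trapezoid\<close>

definition catD :: "nat \<Rightarrow> nat \<Rightarrow> int" where
  "catD a b = (if b = 0 then 1
     else if b \<le> a then int ((a + b) choose b) - int ((a + b) choose (b - 1))
     else 0)"

definition catDm :: "nat \<Rightarrow> nat \<Rightarrow> nat \<Rightarrow> int" where
  "catDm m a b = (if b < m then int ((a + b) choose b)
     else if b \<le> a + m - 1 then int ((a + b) choose b) - int ((a + b) choose (b - m))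
     else 0)"

end

theory Submission
  imports Defs
begin


function Pf :: "(nat \<Rightarrow> nat \<Rightarrow> bool) \<Rightarrow> nat \<Rightarrow> nat \<Rightarrow> nat \<Rightarrow> nat \<Rightarrow> nat" where
"Pf ok x0 y0 x y = (if \<not> ok x y \<or> x < x0 \<or> y < y0 then 0 else if x = x0 \<and> y = y0 then 1
   else (if x0 < x then Pf ok x0 y0 (x-1) y else 0) + (if y0 < y then Pf ok x0 y0 x (y-1) else 0))"
  by auto
termination by (relation "measure (\<lambda>(ok,x0,y0,x,y). x+y)") auto

declare Pf.simps[simp del]

lemma Pf_cong:
  "(\<And>x y. x0 \<le> x \<Longrightarrow> x \<le> X \<Longrightarrow> y0 \<le> y \<Longrightarrow> y \<le> Y \<Longrightarrow> ok x y = ok' x y)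
   \<Longrightarrow> Pf ok x0 y0 X Y = Pf ok' x0 y0 X Y"
proof (induction ok x0 y0 X Y rule: Pf.induct)
  case (1 ok x0 y0 x y)
  show ?case
    apply (subst (1 2) Pf.simps)
    using 1 by (auto simp del: One_nat_def)
qed

lemma Pf_shift:
  "x0 \<le> X \<Longrightarrow> y0 \<le> Y \<Longrightarrow>
   Pf ok x0 y0 X Y = Pf (\<lambda>x y. ok (x+x0) (y+y0)) 0 0 (X-x0) (Y-y0)"
proof (induction ok x0 y0 X Y rule: Pf.induct)
  case (1 ok x0 y0 x y)
  show ?case
    apply (subst (1 2) Pf.simps)
    using 1 by (auto simp del: One_nat_def) (simp_all add: ac_simps)
qed

lemma Pf_zero: "x < x0 \<or> y < y0 \<or> \<not> ok x y \<Longrightarrow> Pf ok x0 y0 x y = 0"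
  by (subst Pf.simps) auto

lemma Pf_base: "ok x y \<Longrightarrow> Pf ok x y x y = 1"
  by (subst Pf.simps) auto

lemma Pf_rec: "ok x y \<Longrightarrow> x0 \<le> x \<Longrightarrow> y0 \<le> y \<Longrightarrow> x0 + y0 < x + y \<Longrightarrow>
  Pf ok x0 y0 x y = (if x0 < x then Pf ok x0 y0 (x-1) y else 0) + (if y0 < y then Pf ok x0 y0 x (y-1) else 0)"
  by (subst Pf.simps) auto

lemma Pf_step:
  assumes "i \<le> d" "d < X + Y" "ok X Y"
  shows "Pf ok i (d-i) X Y = (if 0 < X then Pf ok i (d-i) (X-1) Y else 0)
          + (if 0 < Y then Pf ok i (d-i) X (Y-1) else 0)"
proof (cases "X < i \<or> Y < d - i")
  case True
  have z: "Pf ok i (d-i) X Y = 0" "(if 0 < X then Pf ok i (d-i) (X-1) Y else 0) = 0"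
    "(if 0 < Y then Pf ok i (d-i) X (Y-1) else 0) = 0" using True by (auto intro!: Pf_zero)
  show ?thesis by (simp only: z)
next
  case False
  then have r: "Pf ok i (d-i) X Y = (if i < X then Pf ok i (d-i) (X-1) Y else 0) + (if d-i < Y then Pf ok i (d-i) X (Y-1) else 0)"
    using assms by (intro Pf_rec) auto
  show ?thesis unfolding r using False
    by (cases "X = i"; cases "Y = d - i") (auto intro!: Pf_zero)
qed

lemma Pf_decomp:
  "d \<le> X + Y \<Longrightarrow> Pf ok 0 0 X Y = (\<Sum>i\<le>d. Pf ok 0 0 i (d-i) * Pf ok i (d-i) X Y)"
proof (induction "X+Y" arbitrary: X Y rule: less_induct)
  case less
  show ?case
  proof (cases "X + Y = d")
    case True
    have "(\<Sum>i\<le>d. Pf ok 0 0 i (d-i) * Pf ok i (d-i) X Y)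
        = (\<Sum>i\<le>d. if i = X then Pf ok 0 0 X Y else 0)"
    proof (rule sum.cong[OF refl])
      fix i assume "i \<in> {..d}"
      show "Pf ok 0 0 i (d-i) * Pf ok i (d-i) X Y = (if i = X then Pf ok 0 0 X Y else 0)"
      proof (cases "i = X")
        case True
        show ?thesis
        proof (cases "ok X Y")
          case True
          then show ?thesis using \<open>i = X\<close> \<open>X+Y=d\<close> by (auto simp: Pf_base)
        next
          case False
          then show ?thesis using \<open>i = X\<close> \<open>X+Y=d\<close> by (auto simp: Pf_zero)
        qed
      next
        case False
        then have "X < i \<or> Y < d - i" using \<open>X+Y=d\<close> by auto
        then show ?thesis using False by (auto simp: Pf_zero)
      qed
    qed
    also have "\<dots> = Pf ok 0 0 X Y" using True by simp
    finally show ?thesis by simp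
  next
    case False
    then have lt: "d < X + Y" using less by simp
    show ?thesis
    proof (cases "ok X Y")
      case False
      then show ?thesis by (auto simp: Pf_zero)
    next
      case ok: True
      have L: "Pf ok 0 0 X Y = (if 0 < X then Pf ok 0 0 (X-1) Y else 0)
          + (if 0 < Y then Pf ok 0 0 X (Y-1) else 0)"
        using ok lt by (intro Pf_rec) auto
      have IH1: "0 < X \<Longrightarrow> Pf ok 0 0 (X-1) Y = (\<Sum>i\<le>d. Pf ok 0 0 i (d-i) * Pf ok i (d-i) (X-1) Y)"
        using less lt by auto
      have IH2: "0 < Y \<Longrightarrow> Pf ok 0 0 X (Y-1) = (\<Sum>i\<le>d. Pf ok 0 0 i (d-i) * Pf ok i (d-i) X (Y-1))"
        using less lt by auto
      have R: "(\<Sum>i\<le>d. Pf ok 0 0 i (d-i) * Pf ok i (d-i) X Y) =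
        (\<Sum>i\<le>d. Pf ok 0 0 i (d-i) * (if 0 < X then Pf ok i (d-i) (X-1) Y else 0))
        + (\<Sum>i\<le>d. Pf ok 0 0 i (d-i) * (if 0 < Y then Pf ok i (d-i) X (Y-1) else 0))"
        unfolding sum.distrib[symmetric]
        by (rule sum.cong[OF refl]) (simp add: Pf_step[of _ d X Y ok, OF _ lt ok] distrib_left)
      show ?thesis unfolding R L
        using IH1 IH2 by (cases "0 < X"; cases "0 < Y") auto
    qed
  qed
qed



definition bi :: "nat \<Rightarrow> int \<Rightarrow> int" where
  "bi n k = (if k < 0 then 0 else int (n choose nat k))"

lemma bi_pascal: "bi (Suc n) k = bi n (k-1) + bi n k"
proof -
  consider "k < 0" | "k = 0" | "k > 0" by linarith
  then show ?thesis
  proof cases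
    case 3
    then obtain j where j: "nat k = Suc j" by (metis gr0_implies_Suc zero_less_nat_eq)
    then have "nat (k-1) = j" by linarith
    then show ?thesis using 3 j by (simp add: bi_def)
  qed (auto simp: bi_def)
qed

lemma bi_neg: "k < 0 \<Longrightarrow> bi n k = 0" by (simp add: bi_def)
lemma bi_same: "bi n (int n) = 1" by (simp add: bi_def)
lemma bi_same': "0 < b \<Longrightarrow> bi (b - Suc 0) (int b - 1) = 1"
proof -
  assume "0 < b"
  then have "nat (int b - 1) = b - Suc 0" by linarith
  then show ?thesis using \<open>0 < b\<close> by (simp add: bi_def)
qed
lemma bi_0: "bi n 0 = 1" by (simp add: bi_def)
lemma bi_sym: "bi (a + b) (int b) = bi (a + b) (int a)"
  by (simp add: bi_def binomial_symmetric[of b "a+b"])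

lemma catDm_alt: "catDm (k+1) a b = (if b \<le> a + k then bi (a+b) (int b) - bi (a+b) (int b - int k - 1) else 0)"
proof (cases "b < k + 1")
  case True
  then show ?thesis by (auto simp: catDm_def bi_def)
next
  case False
  then have "nat (int b - int k - 1) = b - (k+1)" by linarith
  then show ?thesis using False by (auto simp: catDm_def bi_def)
qed

lemma Pf_catDm_aux:
  "int (Pf (\<lambda>x y. y \<le> x + k) 0 0 a b) =
     (if b \<le> a + k then bi (a+b) (int b) - bi (a+b) (int b - int k - 1) else 0)"
proof (induction "a+b" arbitrary: a b rule: less_induct)
  case less
  define E where "E a b = bi (a+b) (int b) - bi (a+b) (int b - int k - 1)" for a b
  show ?case
  proof (cases "b \<le> a + k")
    case False
    then show ?thesis by (simp add: Pf_zero)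
  next
    case okb: True
    show ?thesis
    proof (cases "a + b = 0")
      case True
      then show ?thesis by (simp add: Pf_base bi_0 bi_neg)
    next
      case False
      have r: "Pf (\<lambda>x y. y \<le> x + k) 0 0 a b = (if 0 < a then Pf (\<lambda>x y. y \<le> x + k) 0 0 (a-1) b else 0)
         + (if 0 < b then Pf (\<lambda>x y. y \<le> x + k) 0 0 a (b-1) else 0)"
        using okb False by (intro Pf_rec) auto
      have IH1: "0 < a \<Longrightarrow> int (Pf (\<lambda>x y. y \<le> x + k) 0 0 (a-1) b) =
           (if b \<le> a - 1 + k then E (a-1) b else 0)"
        using less False unfolding E_def by auto
      have IH2: "0 < b \<Longrightarrow> int (Pf (\<lambda>x y. y \<le> x + k) 0 0 a (b-1)) = E a (b-1)"
        using less False okb unfolding E_def by auto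
      have key: "E a b = (if 0 < a then (if b \<le> a - 1 + k then E (a-1) b else 0) else 0)
           + (if 0 < b then E a (b-1) else 0)"
      proof -
        consider "a = 0" | "b = 0" | "0 < a" "0 < b" by auto
        then show ?thesis
        proof cases
          case 1
          then have "b > 0" using False by auto
          then have "int b - 1 = int (b-1)" by simp
          then show ?thesis using 1 okb \<open>b > 0\<close> unfolding E_def
            by (auto simp: bi_neg bi_same bi_same')
        next
          case 2
          then have "a > 0" using False by auto
          then show ?thesis using 2 okb unfolding E_def
            by (auto simp: bi_neg bi_0)
        next
          case 3
          define M where "M = a - 1 + b"
          have M1: "a + b = Suc M" "a - 1 + b = M" "a + (b - 1) = M" using 3 by (auto simp: M_def)
          have e1: "E (a-1) b = bi M (int b) - bi M (int b - int k - 1)"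
            unfolding E_def M1 by simp
          have e2: "E a (b-1) = bi M (int b - 1) - bi M (int b - int k - 2)"
            unfolding E_def M1 using 3 by (simp add: of_nat_diff)
          have e0: "E a b = bi M (int b - 1) + bi M (int b) - (bi M (int b - int k - 2) + bi M (int b - int k - 1))"
            unfolding E_def M1 bi_pascal by (simp add: algebra_simps)
          have z: "\<not> b \<le> a - 1 + k \<Longrightarrow> E (a-1) b = 0"
          proof -
            assume "\<not> b \<le> a - 1 + k"
            then have bb: "b = a - 1 + k + 1" using okb 3 by auto
            have "int b - int k - 1 = int (a - 1)" using bb 3 by auto
            then show ?thesis unfolding E_def using bi_sym[of "a-1" b] by simp
          qed
          show ?thesis using 3 e0 e1 e2 z by auto
        qed
      qed
      show ?thesis unfolding r using IH1 IH2 key okb unfolding E_def[symmetric]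
        by (auto split: if_splits)
    qed
  qed
qed

lemma Pf_catDm: "int (Pf (\<lambda>x y. y \<le> x + k) 0 0 a b) = catDm (k+1) a b"
  unfolding Pf_catDm_aux catDm_alt ..

lemma catD_Dm: "catD a b = catDm 1 a b"
  by (auto simp: catD_def catDm_def)

lemma Pf_catD: "int (Pf (\<lambda>x y. y \<le> x) 0 0 a b) = catD a b"
  using Pf_catDm[of 0 a b] by (simp add: catD_Dm)



definition Seq :: "(nat \<Rightarrow> nat) \<Rightarrow> nat \<Rightarrow> nat \<Rightarrow> (nat \<Rightarrow> nat) set" where
"Seq m j x = {h. h \<in> {1..j} \<rightarrow>\<^sub>E {..x} \<and> (\<forall>i\<in>{1..j}. m i \<le> h i) \<and>
    (\<forall>i\<in>{1..j}. \<forall>i'\<in>{1..j}. i \<le> i' \<longrightarrow> h i \<le> h i')}"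

lemma finite_Seq: "finite (Seq m j x)"
  by (rule finite_subset[of _ "{1..j} \<rightarrow>\<^sub>E {..x}"]) (auto simp: Seq_def intro: finite_PiE)

lemma Pf_row0: "ok' = (\<lambda>x y. y = 0 \<or> m y \<le> x) \<Longrightarrow> Pf ok' 0 0 x 0 = 1"
proof (induction x)
  case 0
  then show ?case by (simp add: Pf_base)
next
  case (Suc x)
  then show ?case by (subst Pf_rec) auto
qed

lemma Seq_0: "Seq m 0 x = {\<lambda>_. undefined}"
  by (auto simp: Seq_def)

lemma Seq_le: "h \<in> Seq m j x \<Longrightarrow> i \<in> {1..j} \<Longrightarrow> h i \<le> x"
  by (auto simp: Seq_def PiE_iff)

lemma Seq_m: "h \<in> Seq m j x \<Longrightarrow> i \<in> {1..j} \<Longrightarrow> m i \<le> h i"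
  by (auto simp: Seq_def PiE_iff)

lemma Seq_mono: "x \<le> x' \<Longrightarrow> Seq m j x \<subseteq> Seq m j x'"
  by (auto simp: Seq_def PiE_iff)

lemma Seq_split:
  "Seq m (Suc j) x = {h \<in> Seq m (Suc j) x. h (Suc j) < x} \<union> {h \<in> Seq m (Suc j) x. h (Suc j) = x}"
  using Seq_le[of _ m "Suc j" x "Suc j"] by fastforce

lemma Seq_lt: "0 < x \<Longrightarrow> {h \<in> Seq m (Suc j) x. h (Suc j) < x} = Seq m (Suc j) (x - 1)"
proof (intro equalityI subsetI)
  fix h assume h: "h \<in> {h \<in> Seq m (Suc j) x. h (Suc j) < x}" and "0 < x"
  have "\<forall>i\<in>{1..Suc j}. h i \<le> h (Suc j)" using h by (auto simp: Seq_def)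
  then have "\<forall>i\<in>{1..Suc j}. h i \<le> x - 1" using h by fastforce
  then show "h \<in> Seq m (Suc j) (x - 1)" using h \<open>0 < x\<close> by (auto simp: Seq_def PiE_iff)
next
  fix h assume a: "0 < x" "h \<in> Seq m (Suc j) (x - 1)"
  then have "h (Suc j) \<le> x - 1" using Seq_le[of h m "Suc j" "x-1" "Suc j"] by auto
  moreover have "h \<in> Seq m (Suc j) x" using a Seq_mono[of "x-1" x m "Suc j"] by auto
  ultimately show "h \<in> {h \<in> Seq m (Suc j) x. h (Suc j) < x}" using a by auto
qed

lemma Seq_lt0: "{h \<in> Seq m (Suc j) 0. h (Suc j) < 0} = {}"
  by auto

lemma Seq_eq: "m (Suc j) \<le> x \<Longrightarrow>
   {h \<in> Seq m (Suc j) x. h (Suc j) = x} = (\<lambda>g. g(Suc j := x)) ` Seq m j x"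
proof (intro equalityI subsetI)
  fix h assume "m (Suc j) \<le> x" and h: "h \<in> {h \<in> Seq m (Suc j) x. h (Suc j) = x}"
  have "h = (h(Suc j := undefined))(Suc j := x)" using h by auto
  moreover have "h(Suc j := undefined) \<in> Seq m j x" using h by (auto simp: Seq_def PiE_iff extensional_def)
  ultimately show "h \<in> (\<lambda>g. g(Suc j := x)) ` Seq m j x" by blast
next
  fix h assume a: "m (Suc j) \<le> x" and "h \<in> (\<lambda>g. g(Suc j := x)) ` Seq m j x"
  then obtain g where g: "g \<in> Seq m j x" and hg: "h = g(Suc j := x)" by auto
  have "h \<in> Seq m (Suc j) x"
    unfolding Seq_def
  proof (intro CollectI conjI)
    show "h \<in> {1..Suc j} \<rightarrow>\<^sub>E {..x}" using g hg by (auto simp: Seq_def PiE_iff extensional_def)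
    show "\<forall>i\<in>{1..Suc j}. m i \<le> h i" using g hg a by (auto simp: Seq_def le_Suc_eq)
    show "\<forall>i\<in>{1..Suc j}. \<forall>i'\<in>{1..Suc j}. i \<le> i' \<longrightarrow> h i \<le> h i'"
      using g hg by (auto simp: Seq_def PiE_iff le_Suc_eq)
  qed
  then show "h \<in> {h \<in> Seq m (Suc j) x. h (Suc j) = x}" using hg by auto
qed

lemma inj_upd: "inj_on (\<lambda>g. g(Suc j := x)) (Seq m j x)"
proof (rule inj_onI)
  fix g g' assume "g \<in> Seq m j x" "g' \<in> Seq m j x" "g(Suc j := x) = g'(Suc j := x)"
  note a = this
  show "g = g'"
  proof (rule ext)
    fix i show "g i = g' i"
    proof (cases "i = Suc j")
      case True
      then show ?thesis using a(1,2) by (auto simp: Seq_def PiE_iff extensional_def)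
    next
      case False
      then show ?thesis using fun_cong[OF a(3), of i] by simp
    qed
  qed
qed

lemma card_Seq: "card (Seq m j x) = Pf (\<lambda>x y. y = 0 \<or> m y \<le> x) 0 0 x j"
proof (induction j arbitrary: x)
  case 0
  then show ?case by (simp add: Seq_0 Pf_row0)
next
  case (Suc j)
  note IHj = Suc.IH
  let ?ok = "\<lambda>x y. y = 0 \<or> m y \<le> x"
  show ?case
  proof (induction x)
    case 0
    show ?case
    proof (cases "m (Suc j) \<le> 0")
      case False
      then have "Seq m (Suc j) 0 = {}" by (auto simp: Seq_def)
      then show ?thesis using False by (simp add: Pf_zero)
    next
      case True
      have "card (Seq m (Suc j) 0) = card ((\<lambda>g. g(Suc j := 0)) ` Seq m j 0)"
        using Seq_split[of m j 0] Seq_eq[of m j 0, OF True] by simp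
      also have "\<dots> = card (Seq m j 0)" by (rule card_image[OF inj_upd])
      also have "\<dots> = Pf ?ok 0 0 0 j" by (rule IHj)
      also have "\<dots> = Pf ?ok 0 0 0 (Suc j)" using True by (subst (2) Pf_rec) auto
      finally show ?thesis .
    qed
  next
    case (Suc x)
    show ?case
    proof (cases "m (Suc j) \<le> Suc x")
      case False
      then have "Seq m (Suc j) (Suc x) = {}"
        using Seq_le[of _ m "Suc j" "Suc x" "Suc j"] Seq_m[of _ m "Suc j" "Suc x" "Suc j"] by force
      then show ?thesis using False by (simp add: Pf_zero)
    next
      case True
      have disj: "Seq m (Suc j) x \<inter> (\<lambda>g. g(Suc j := Suc x)) ` Seq m j (Suc x) = {}"
        using Seq_le[of _ m "Suc j" x "Suc j"] by force
      have eqs: "Seq m (Suc j) (Suc x) = Seq m (Suc j) x \<union> (\<lambda>g. g(Suc j := Suc x)) ` Seq m j (Suc x)"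
        using Seq_split[of m j "Suc x"] Seq_lt[of "Suc x" m j] Seq_eq[of m j "Suc x", OF True] by simp
      have "card (Seq m (Suc j) (Suc x)) = card (Seq m (Suc j) x) + card ((\<lambda>g. g(Suc j := Suc x)) ` Seq m j (Suc x))"
        unfolding eqs by (rule card_Un_disjoint[OF finite_Seq finite_imageI[OF finite_Seq] disj])
      also have "\<dots> = Pf ?ok 0 0 x (Suc j) + Pf ?ok 0 0 (Suc x) j"
        using IHj[of "Suc x"] Suc.IH card_image[OF inj_upd] by simp
      also have "\<dots> = Pf ?ok 0 0 (Suc x) (Suc j)" using True by (subst (3) Pf_rec) auto
      finally show ?thesis .
    qed
  qed
qed



lemma cat_snoc: "xs \<noteq> [] \<Longrightarrow> caterpillar (xs @ [y]) = Node (caterpillar xs) (Leaf y)"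
proof (cases xs)
  case (Cons x1 r)
  then show ?thesis by (cases r) auto
qed simp

lemma cat_leaves: "xs \<noteq> [] \<Longrightarrow> leaves (caterpillar xs) = set xs"
proof (induction xs rule: rev_induct)
  case (snoc x xs)
  then show ?case by (cases "xs = []") (auto simp: cat_snoc)
qed simp

lemma subt_cat: "i < length xs \<Longrightarrow>
   subt (caterpillar xs) (replicate i False) = Some (caterpillar (take (length xs - i) xs))"
proof (induction xs arbitrary: i rule: rev_induct)
  case (snoc x xs)
  show ?case
  proof (cases i)
    case 0
    then show ?thesis by simp
  next
    case (Suc i')
    then have "i' < length xs" "xs \<noteq> []" using snoc.prems by auto
    then show ?thesis using Suc snoc.IH[of i'] by (simp add: cat_snoc)
  qed
qed simp

lemma subt_cat_node: "xs \<noteq> [] \<Longrightarrow> subt (caterpillar xs) p = Some (Node l r) \<Longrightarrow>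
   \<exists>i. p = replicate i False \<and> i < length xs - 1"
proof (induction xs arbitrary: p rule: rev_induct)
  case (snoc x xs)
  show ?case
  proof (cases "xs = []")
    case True
    then show ?thesis using snoc.prems by (cases p) auto
  next
    case False
    note c = cat_snoc[OF False, of x]
    show ?thesis
    proof (cases p)
      case Nil
      then show ?thesis using False by (intro exI[of _ 0]) auto
    next
      case (Cons b p')
      show ?thesis
      proof (cases b)
        case True
        then show ?thesis using snoc.prems Cons c by (cases p') auto
      next
        case b: False
        then have "subt (caterpillar xs) p' = Some (Node l r)" using snoc.prems Cons c by simp
        then obtain i where "p' = replicate i False" "i < length xs - 1" using snoc.IH False by blast
        then show ?thesis using Cons b by (intro exI[of _ "Suc i"]) auto
      qed
    qed
  qed
qed simp

lemma cat_node: "2 \<le> length xs \<Longrightarrow> \<exists>l r. caterpillar xs = Node l r"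
proof (cases xs rule: rev_exhaust)
  case (snoc ys y)
  assume "2 \<le> length xs"
  then have "ys \<noteq> []" using snoc by auto
  then have "caterpillar xs = Node (caterpillar ys) (Leaf y)" using snoc cat_snoc by simp
  then show ?thesis by blast
qed simp

lemma internal_cat: "xs \<noteq> [] \<Longrightarrow>
  internal (caterpillar xs) = (\<lambda>i. replicate i False) ` {..<length xs - 1}"
proof (intro equalityI subsetI)
  fix p assume a: "xs \<noteq> []" "p \<in> internal (caterpillar xs)"
  then obtain l r where "subt (caterpillar xs) p = Some (Node l r)" unfolding internal_def by blast
  then obtain i where "p = replicate i False" "i < length xs - 1" using subt_cat_node[OF a(1)] by blast
  then show "p \<in> (\<lambda>i. replicate i False) ` {..<length xs - 1}" by blast
next
  fix p assume "p \<in> (\<lambda>i. replicate i False) ` {..<length xs - 1}"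
  then obtain i where i: "i < length xs - 1" "p = replicate i False" by auto
  then have "subt (caterpillar xs) p = Some (caterpillar (take (length xs - i) xs))"
    by (simp add: subt_cat)
  moreover have "2 \<le> length (take (length xs - i) xs)" using i by auto
  then obtain l r where "caterpillar (take (length xs - i) xs) = Node l r" using cat_node by blast
  ultimately show "p \<in> internal (caterpillar xs)"
    unfolding internal_def by simp
qed

lemma leaves_at_cat: "i < length xs \<Longrightarrow>
  leaves_at (caterpillar xs) (replicate i False) = set (take (length xs - i) xs)"
proof -
  assume a: "i < length xs"
  then have "xs \<noteq> []" by (metis length_0_conv not_less0)
  then have "take (length xs - i) xs \<noteq> []" using a by simp
  then show ?thesis unfolding leaves_at_def using a by (simp add: subt_cat cat_leaves)
qed

lemma prefix_rep: "prefix (replicate i a) (replicate j a) \<longleftrightarrow> i \<le> j"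
proof
  assume "prefix (replicate i a) (replicate j a)"
  then show "i \<le> j" using prefix_length_le by fastforce
next
  assume "i \<le> j"
  then have "replicate j a = replicate i a @ replicate (j - i) a"
    by (metis le_add_diff_inverse replicate_add)
  then show "prefix (replicate i a) (replicate j a)" by (metis prefixI)
qed

lemma set_take_map: "k \<le> n \<Longrightarrow> set (take k (map g [1..<n+1])) = g ` {1..k}"
proof -
  assume "k \<le> n"
  then have t: "take k [1..<n+1] = [1..<1+k]" by (intro take_upt) simp
  have "set (take k (map g [1..<n+1])) = g ` set [1..<1+k]" by (simp only: take_map t set_map)
  also have "set [1..<1+k] = {1..k}" by auto
  finally show ?thesis .
qed



lemma hist_card:
  fixes g s :: "nat \<Rightarrow> 'a" and m :: "nat \<Rightarrow> nat" and n :: nat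
  assumes n2: "2 \<le> n"
    and cond: "\<And>j hh. 1 \<le> j \<Longrightarrow> j \<le> n - 1 \<Longrightarrow> 1 \<le> hh \<Longrightarrow> hh \<le> n - 1 \<Longrightarrow>
        (g ` {1..j+1} \<subseteq> s ` {1..hh+1}) = (m j \<le> hh)"
    and mpos: "\<And>j. 1 \<le> j \<Longrightarrow> j \<le> n - 1 \<Longrightarrow> 1 \<le> m j"
  shows "num_coal_hist (caterpillar (map g [1..<n+1])) (caterpillar (map s [1..<n+1]))
     = card (Seq m (n-1) (n-1))"
proof -
  define N where "N = n - 1"
  have nN: "n = N + 1" "1 \<le> N" using n2 by (auto simp: N_def)
  define G where "G = caterpillar (map g [1..<n+1])"
  define S where "S = caterpillar (map s [1..<n+1])"
  define R where "R i = replicate i False" for i :: nat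
  have iG: "internal G = R ` {..<N}" unfolding G_def R_def N_def
    using n2 by (subst internal_cat) auto
  have iS: "internal S = R ` {..<N}" unfolding S_def R_def N_def
    using n2 by (subst internal_cat) auto
  have lG: "leaves_at G (R i) = g ` {1..n-i}" if "i < N" for i
  proof -
    have len: "length (map g [1..<n+1]) = n" by simp
    have "i < length (map g [1..<n+1])" using that nN by simp
    then have "leaves_at G (R i) = set (take (length (map g [1..<n+1]) - i) (map g [1..<n+1]))"
      unfolding G_def R_def by (rule leaves_at_cat)
    also have "\<dots> = set (take (n - i) (map g [1..<n+1]))" by (simp only: len)
    also have "\<dots> = g ` {1..n-i}" by (rule set_take_map) simp
    finally show ?thesis .
  qed
  have lS: "leaves_at S (R i) = s ` {1..n-i}" if "i < N" for i
  proof -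
    have len: "length (map s [1..<n+1]) = n" by simp
    have "i < length (map s [1..<n+1])" using that nN by simp
    then have "leaves_at S (R i) = set (take (length (map s [1..<n+1]) - i) (map s [1..<n+1]))"
      unfolding S_def R_def by (rule leaves_at_cat)
    also have "\<dots> = set (take (n - i) (map s [1..<n+1]))" by (simp only: len)
    also have "\<dots> = s ` {1..n-i}" by (rule set_take_map) simp
    finally show ?thesis .
  qed
  have lenR: "length (R i) = i" for i unfolding R_def by simp
  have pre: "prefix (R i) (R j) \<longleftrightarrow> i \<le> j" for i j unfolding R_def by (rule prefix_rep)
  define H where "H = {h \<in> internal G \<rightarrow>\<^sub>E internal S. coal_hist G S h}"
  define f where "f h = (\<lambda>j. if j \<in> {1..N} then N - length (h (R (N - j))) else undefined)"
    for h :: "bool list \<Rightarrow> bool list"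
  define f' where "f' \<phi> = (\<lambda>p. if p \<in> internal G then R (N - \<phi> (N - length p)) else undefined)"
    for \<phi> :: "nat \<Rightarrow> nat"
  have hR: "\<exists>t<N. h (R i) = R t" if "h \<in> H" "i < N" for h i
  proof -
    have "R i \<in> internal G" using iG that(2) by auto
    then have "h (R i) \<in> internal S" using that(1) by (auto simp: H_def PiE_iff)
    then show ?thesis using iS by auto
  qed
  have "bij_betw f H (Seq m N N)"
  proof (rule bij_betw_byWitness[where f'=f'])
    show "\<forall>h\<in>H. f' (f h) = h"
    proof
      fix h assume h: "h \<in> H"
      show "f' (f h) = h"
      proof (rule ext)
        fix p show "f' (f h) p = h p"
        proof (cases "p \<in> internal G")
          case True
          then obtain i where i: "i < N" "p = R i" using iG by auto
          obtain t where t: "t < N" "h (R i) = R t" using hR[OF h i(1)] by blast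
          have "N - i \<in> {1..N}" using i by auto
          then have "f h (N - i) = N - t" using i t by (simp add: f_def lenR)
          then show ?thesis using True i t by (simp add: f'_def lenR)
        next
          case False
          then show ?thesis using h by (auto simp: f'_def H_def PiE_iff extensional_def)
        qed
      qed
    qed
    show "\<forall>\<phi>\<in>Seq m N N. f (f' \<phi>) = \<phi>"
    proof
      fix \<phi> assume \<phi>: "\<phi> \<in> Seq m N N"
      show "f (f' \<phi>) = \<phi>"
      proof (rule ext)
        fix j show "f (f' \<phi>) j = \<phi> j"
        proof (cases "j \<in> {1..N}")
          case True
          then have "R (N - j) \<in> internal G" using iG by auto
          then have "f' \<phi> (R (N - j)) = R (N - \<phi> j)" using True by (simp add: f'_def lenR)
          moreover have "\<phi> j \<le> N" using Seq_le[OF \<phi> True] .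
          ultimately show ?thesis using True by (simp add: f_def lenR)
        next
          case False
          then show ?thesis using \<phi> by (auto simp: f_def Seq_def PiE_iff extensional_def)
        qed
      qed
    qed
    show "f ` H \<subseteq> Seq m N N"
    proof
      fix \<phi> assume "\<phi> \<in> f ` H"
      then obtain h where h: "h \<in> H" and \<phi>: "\<phi> = f h" by blast
      have ch: "coal_hist G S h" using h by (simp add: H_def)
      have val: "\<exists>t<N. h (R (N - j)) = R t \<and> \<phi> j = N - t" if jj: "j \<in> {1..N}" for j
      proof -
        have "N - j < N" using jj by auto
        then obtain t where "t < N" "h (R (N - j)) = R t" using hR[OF h, of "N - j"] by auto
        then show ?thesis using jj \<phi> by (auto simp: f_def lenR)
      qed
      show "\<phi> \<in> Seq m N N" unfolding Seq_def
      proof (intro CollectI conjI)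
        show "\<phi> \<in> {1..N} \<rightarrow>\<^sub>E {..N}" using \<phi> by (auto simp: f_def PiE_iff extensional_def)
        show "\<forall>j\<in>{1..N}. m j \<le> \<phi> j"
        proof
          fix j assume j: "j \<in> {1..N}"
          obtain t where t: "t < N" "h (R (N - j)) = R t" "\<phi> j = N - t" using val[OF j] by blast
          have "R (N - j) \<in> internal G" using iG j by auto
          then have "leaves_at G (R (N - j)) \<subseteq> leaves_at S (R t)"
            using ch t unfolding coal_hist_def by metis
          then have "g ` {1..n - (N - j)} \<subseteq> s ` {1..n - t}" using lG lS j t by auto
          moreover have "n - (N - j) = j + 1" "n - t = (N - t) + 1" using j t nN by auto
          ultimately have "g ` {1..j+1} \<subseteq> s ` {1..(N-t)+1}" by simp
          then have "m j \<le> N - t" using cond[of j "N - t"] j t nN by auto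
          then show "m j \<le> \<phi> j" using t by simp
        qed
        show "\<forall>i\<in>{1..N}. \<forall>i'\<in>{1..N}. i \<le> i' \<longrightarrow> \<phi> i \<le> \<phi> i'"
        proof (intro ballI impI)
          fix j j' assume j: "j \<in> {1..N}" and j': "j' \<in> {1..N}" and le: "j \<le> j'"
          obtain t where t: "t < N" "h (R (N - j)) = R t" "\<phi> j = N - t" using val[OF j] by blast
          obtain t' where t': "t' < N" "h (R (N - j')) = R t'" "\<phi> j' = N - t'" using val[OF j'] by blast
          have in1: "R (N - j') \<in> internal G" "R (N - j) \<in> internal G" using iG j j' by auto
          have "prefix (R (N - j')) (R (N - j))" using pre le by simp
          then have "prefix (h (R (N - j'))) (h (R (N - j)))"
            using ch in1 unfolding coal_hist_def by blast
          then have "t' \<le> t" using t t' pre by simp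
          then show "\<phi> j \<le> \<phi> j'" using t t' by simp
        qed
      qed
    qed
    show "f' ` Seq m N N \<subseteq> H"
    proof
      fix h assume "h \<in> f' ` Seq m N N"
      then obtain \<phi> where \<phi>: "\<phi> \<in> Seq m N N" and hd: "h = f' \<phi>" by blast
      have hv: "h (R i) = R (N - \<phi> (N - i)) \<and> 1 \<le> \<phi> (N - i) \<and> \<phi> (N - i) \<le> N
          \<and> m (N - i) \<le> \<phi> (N - i)" if "i < N" for i
      proof -
        have j: "N - i \<in> {1..N}" using that by auto
        have "R i \<in> internal G" using iG that by auto
        then have "h (R i) = R (N - \<phi> (N - i))" using hd by (simp add: f'_def lenR)
        moreover have "m (N - i) \<le> \<phi> (N - i)" using Seq_m[OF \<phi> j] .
        moreover have "1 \<le> m (N - i)" using mpos[of "N - i"] j nN by auto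
        moreover have "\<phi> (N - i) \<le> N" using Seq_le[OF \<phi> j] .
        ultimately show ?thesis by simp
      qed
      have "h \<in> internal G \<rightarrow>\<^sub>E internal S"
      proof (rule PiE_I)
        fix p assume "p \<in> internal G"
        then obtain i where i: "i < N" "p = R i" using iG by auto
        then show "h p \<in> internal S" using hv[OF i(1)] iS by auto
      next
        fix p assume "p \<notin> internal G"
        then show "h p = undefined" using hd by (simp add: f'_def)
      qed
      moreover have "coal_hist G S h" unfolding coal_hist_def
      proof (intro conjI ballI impI)
        fix v assume "v \<in> internal G"
        then obtain i where i: "i < N" "v = R i" using iG by auto
        note hvi = hv[OF i(1)]
        show "h v \<in> internal S" using hvi i iS by auto
        have "N - \<phi> (N - i) < N" using hvi by auto
        then have "leaves_at S (h v) = s ` {1..n - (N - \<phi> (N - i))}" using lS hvi i by auto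
        also have "n - (N - \<phi> (N - i)) = \<phi> (N - i) + 1" using hvi nN by auto
        finally have lsv: "leaves_at S (h v) = s ` {1..\<phi> (N - i) + 1}" .
        have "leaves_at G v = g ` {1..(N - i) + 1}" using lG i nN by auto
        moreover have "g ` {1..(N - i) + 1} \<subseteq> s ` {1..\<phi> (N - i) + 1}"
          using cond[of "N - i" "\<phi> (N - i)"] hvi i nN by auto
        ultimately show "leaves_at G v \<subseteq> leaves_at S (h v)" using lsv by simp
      next
        fix v1 v2 assume v1: "v1 \<in> internal G" and v2: "v2 \<in> internal G" and p: "prefix v1 v2"
        obtain i1 where i1: "i1 < N" "v1 = R i1" using iG v1 by auto
        obtain i2 where i2: "i2 < N" "v2 = R i2" using iG v2 by auto
        have "i1 \<le> i2" using p i1 i2 pre by simp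
        then have "N - i2 \<le> N - i1" by simp
        moreover have "N - i2 \<in> {1..N}" "N - i1 \<in> {1..N}" using i1 i2 by auto
        ultimately have "\<phi> (N - i2) \<le> \<phi> (N - i1)" using \<phi> unfolding Seq_def by blast
        then have "N - \<phi> (N - i1) \<le> N - \<phi> (N - i2)" by simp
        then show "prefix (h v1) (h v2)" using hv[OF i1(1)] hv[OF i2(1)] i1 i2 pre by simp
      qed
      ultimately show "h \<in> H" unfolding H_def by blast
    qed
  qed
  then have "card H = card (Seq m N N)" by (rule bij_betw_same_card)
  then show ?thesis unfolding H_def num_coal_hist_def G_def S_def N_def by simp
qed



lemma inj_on_img_sub: "inj_on f C \<Longrightarrow> A \<subseteq> C \<Longrightarrow> B \<subseteq> C \<Longrightarrow> (f`A \<subseteq> f`B) = (A \<subseteq> B)"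
proof
  assume a: "inj_on f C" "A \<subseteq> C" "B \<subseteq> C" "f`A \<subseteq> f`B"
  show "A \<subseteq> B"
  proof
    fix x assume "x \<in> A"
    then have "f x \<in> f`B" "x \<in> C" using a by auto
    then show "x \<in> B" using inj_on_image_mem_iff[of f C x B] a by blast
  qed
qed blast

theorem proposition9:
  fixes n ks kl :: nat and s :: "nat \<Rightarrow> 'a"
  assumes "n \<ge> 3" and "inj_on s {1..n}"
    and "1 \<le> ks" and "ks < kl" and "kl \<le> n" and "kl \<noteq> 2"
  defines "g \<equiv> (\<lambda>k. if k = ks then s kl else if ks < k \<and> k \<le> kl then s (k - 1) else s k)"
    and "\<delta> \<equiv> (if ks = 1 then 1 else 0 :: nat)"
  shows "int (num_coal_hist (caterpillar (map g [1..<n+1])) (caterpillar (map s [1..<n+1])))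
    = (\<Sum>c = 0..min (ks + \<delta> - 2) (n - kl).
         catD (kl - 1 + c) (ks + \<delta> - 2 - c)
         * catDm (kl + 2 + 2 * c - ks - \<delta>) (n - kl - c) (n + 1 + c - ks - \<delta>))"
proof -
  note n3 = assms(1) and inj = assms(2) and ks1 = assms(3) and kskl = assms(4) and kln = assms(5)
  define N where "N = n - 1"
  define L where "L = kl - 1"
  define a where "a = ks - 1 + \<delta>"
  define m where "m j = (if ks - 1 \<le> j \<and> j \<le> kl - 1 then kl - 1 else j)" for j
  define \<pi> where "\<pi> k = (if k = ks then kl else if ks < k \<and> k \<le> kl then k - 1 else k)" for k
  have d01: "\<delta> = (if ks = 1 then 1 else 0)" unfolding \<delta>_def by simp
  have g\<pi>: "g k = s (\<pi> k)" for k unfolding g_def \<pi>_def by simp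
  have \<pi>r: "\<pi> k \<in> {1..n}" if "k \<in> {1..n}" for k using that ks1 kskl kln unfolding \<pi>_def by auto
  have cond: "(g ` {1..j+1} \<subseteq> s ` {1..hh+1}) = (m j \<le> hh)"
    if j: "1 \<le> j" "j \<le> n - 1" and hh: "1 \<le> hh" "hh \<le> n - 1" for j hh
  proof -
    have "g ` {1..j+1} = s ` (\<pi> ` {1..j+1})" by (auto simp: g\<pi>)
    moreover have "\<pi> ` {1..j+1} \<subseteq> {1..n}" using \<pi>r j by auto
    moreover have "{1..hh+1} \<subseteq> {1..n}" using hh by auto
    ultimately have "(g ` {1..j+1} \<subseteq> s ` {1..hh+1}) = (\<pi> ` {1..j+1} \<subseteq> {1..hh+1})"
      using inj_on_img_sub[OF inj] by simp
    also have "\<dots> = (m j \<le> hh)"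
    proof
      assume sub: "\<pi> ` {1..j+1} \<subseteq> {1..hh+1}"
      show "m j \<le> hh"
      proof (cases "ks - 1 \<le> j \<and> j \<le> kl - 1")
        case True
        then have "ks \<in> {1..j+1}" using ks1 by auto
        then have "\<pi> ks \<in> {1..hh+1}" using sub by blast
        then have "\<pi> ks \<le> hh + 1" by simp
        then show ?thesis using True unfolding m_def \<pi>_def by auto
      next
        case False
        have "j + 1 \<in> {1..j+1}" by auto
        then have "\<pi> (j+1) \<in> {1..hh+1}" using sub by blast
        then have "\<pi> (j+1) \<le> hh + 1" by simp
        moreover have "\<pi> (j+1) = j + 1" using False kskl unfolding \<pi>_def by auto
        ultimately show ?thesis using False unfolding m_def by auto
      qed
    next
      assume mj: "m j \<le> hh"
      show "\<pi> ` {1..j+1} \<subseteq> {1..hh+1}"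
      proof
        fix y assume "y \<in> \<pi> ` {1..j+1}"
        then obtain k where k: "k \<in> {1..j+1}" "y = \<pi> k" by auto
        have "k \<in> {1..n}" using k j by auto
        then have "1 \<le> \<pi> k" using \<pi>r by auto
        moreover have "\<pi> k \<le> hh + 1" using k mj unfolding \<pi>_def m_def by (auto split: if_splits)
        ultimately show "y \<in> {1..hh+1}" using k by auto
      qed
    qed
    finally show ?thesis .
  qed
  have mpos: "1 \<le> m j" if "1 \<le> j" "j \<le> n - 1" for j
    using that kskl assms(6) unfolding m_def by auto
  define ok where "ok = (\<lambda>x y. y = 0 \<or> m y \<le> x)"
  have "num_coal_hist (caterpillar (map g [1..<n+1])) (caterpillar (map s [1..<n+1]))
      = card (Seq m (n-1) (n-1))"
    by (rule hist_card) (use n3 cond mpos in auto)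
  also have "\<dots> = Pf ok 0 0 N N" unfolding ok_def N_def by (rule card_Seq)
  finally have step1: "num_coal_hist (caterpillar (map g [1..<n+1])) (caterpillar (map s [1..<n+1]))
      = Pf ok 0 0 N N" .
  define d where "d = L + a - 1"
  define M where "M = min (ks + \<delta> - 2) (n - kl)"
  have a1: "1 \<le> a" "a \<le> L" "L \<le> N" using ks1 kskl kln assms(6) unfolding a_def L_def N_def d01 by auto
  have dN: "d \<le> N + N" using a1 unfolding d_def by auto
  have Md: "M = min (a - 1) (N - L)" unfolding M_def a_def N_def L_def d01 using ks1 kskl kln by auto
  define F where "F i = Pf ok 0 0 i (d-i) * Pf ok i (d-i) N N" for i
  have "Pf ok 0 0 N N = (\<Sum>i\<le>d. F i)" unfolding F_def by (rule Pf_decomp[OF dN])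
  also have "\<dots> = (\<Sum>i\<in>{L..L+M}. F i)"
  proof (rule sum.mono_neutral_right)
    show "finite {..d}" by simp
    show "{L..L+M} \<subseteq> {..d}" using Md a1 unfolding d_def by auto
    show "\<forall>i\<in>{..d} - {L..L+M}. F i = 0"
    proof
      fix i assume i: "i \<in> {..d} - {L..L+M}"
      show "F i = 0"
      proof (cases "i < L")
        case True
        define y where "y = d - i"
        have ya: "a \<le> y" using True a1 unfolding y_def d_def by auto
        have "\<not> ok i y"
        proof (cases "y \<le> kl - 1")
          case True
          then have "m y = kl - 1" using ya unfolding m_def a_def by auto
          then show ?thesis using \<open>i < L\<close> ya a1 unfolding ok_def L_def by auto
        next
          case False
          then have "m y = y" unfolding m_def by auto
          then show ?thesis using \<open>i < L\<close> False ya a1 unfolding ok_def L_def by auto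
        qed
        then show ?thesis unfolding F_def y_def by (simp add: Pf_zero)
      next
        case False
        then have "N < i" using i Md a1 unfolding d_def by auto
        then show ?thesis unfolding F_def by (simp add: Pf_zero)
      qed
    qed
  qed
  also have "\<dots> = (\<Sum>c\<in>{0..M}. F (c + L))"
    using sum.shift_bounds_cl_nat_ivl[of F 0 L M] by (simp add: add.commute)
  finally have step2: "Pf ok 0 0 N N = (\<Sum>c\<in>{0..M}. F (c + L))" .
  have trm: "int (F (c + L)) = catD (kl - 1 + c) (ks + \<delta> - 2 - c)
         * catDm (kl + 2 + 2 * c - ks - \<delta>) (n - kl - c) (n + 1 + c - ks - \<delta>)"
    if c: "c \<in> {0..M}" for c
  proof -
    have cM: "c \<le> a - 1" "c \<le> N - L" using c Md by auto
    have dc: "d - (c + L) = a - 1 - c" unfolding d_def using cM a1 by auto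
    have P1: "Pf ok 0 0 (c + L) (a - 1 - c) = Pf (\<lambda>x y. y \<le> x) 0 0 (c + L) (a - 1 - c)"
    proof (rule Pf_cong)
      fix x y assume "y \<le> a - 1 - c"
      then have ya: "y < a" using a1 by auto
      show "ok x y = (y \<le> x)"
      proof (cases "y = 0")
        case False
        then have "m y = y" using ya unfolding m_def a_def d01 by (auto split: if_splits)
        then show ?thesis unfolding ok_def by auto
      qed (simp add: ok_def)
    qed
    have P2: "Pf ok (c + L) (a - 1 - c) N N = Pf (\<lambda>x y. y \<le> x) (c + L) (a - 1 - c) N N"
    proof (rule Pf_cong)
      fix x y assume "c + L \<le> x"
      then have xL: "L \<le> x" by auto
      show "ok x y = (y \<le> x)"
        using xL unfolding ok_def m_def L_def by auto
    qed
    define k where "k = (c + L) - (a - 1 - c)"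
    have P3: "Pf (\<lambda>x y. y \<le> x) (c + L) (a - 1 - c) N N
        = Pf (\<lambda>x y. y \<le> x + k) 0 0 (N - (c + L)) (N - (a - 1 - c))"
    proof -
      have "Pf (\<lambda>x y. y \<le> x) (c + L) (a - 1 - c) N N
         = Pf (\<lambda>x y. y + (a - 1 - c) \<le> x + (c + L)) 0 0 (N - (c + L)) (N - (a - 1 - c))"
        by (rule Pf_shift) (use cM a1 in auto)
      also have "(\<lambda>x y. y + (a - 1 - c) \<le> x + (c + L)) = (\<lambda>x y. y \<le> x + k)"
        unfolding k_def using cM a1 by (auto simp: fun_eq_iff)
      finally show ?thesis .
    qed
    have e1: "int (Pf ok 0 0 (c + L) (a - 1 - c)) = catD (kl - 1 + c) (ks + \<delta> - 2 - c)"
    proof -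
      have "kl - 1 + c = c + L" "ks + \<delta> - 2 - c = a - 1 - c" unfolding L_def a_def using ks1 by auto
      then show ?thesis unfolding P1 by (simp add: Pf_catD add.commute)
    qed
    have e2: "int (Pf ok (c + L) (a - 1 - c) N N) = catDm (kl + 2 + 2 * c - ks - \<delta>) (n - kl - c) (n + 1 + c - ks - \<delta>)"
    proof -
      have "kl + 2 + 2 * c - ks - \<delta> = k + 1" "n - kl - c = N - (c + L)" "n + 1 + c - ks - \<delta> = N - (a - 1 - c)"
        unfolding k_def L_def a_def N_def d01 using cM a1 ks1 kskl kln n3 unfolding a_def L_def N_def d01
        by (auto split: if_splits)
      then show ?thesis unfolding P2 P3 by (simp add: Pf_catDm)
    qed
    show ?thesis unfolding F_def dc using e1 e2 by simp
  qed
  have "int (num_coal_hist (caterpillar (map g [1..<n+1])) (caterpillar (map s [1..<n+1])))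
      = (\<Sum>c\<in>{0..M}. int (F (c + L)))" unfolding step1 step2 by simp
  also have "\<dots> = (\<Sum>c = 0..M. catD (kl - 1 + c) (ks + \<delta> - 2 - c)
         * catDm (kl + 2 + 2 * c - ks - \<delta>) (n - kl - c) (n + 1 + c - ks - \<delta>))"
    by (rule sum.cong[OF refl]) (rule trm)
  finally show ?thesis unfolding M_def .
qed

end
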